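(* Let $v>0$ and consider the system $$\partial_\xi a=r,\qquad \partial_\xi r=-vr-\frac{sa}{2}+\frac{a|r|}{2},\qquad \partial_\xi s=-vs-ra,$$ and the sets $I_1=\{r>0,\ s=2r\}$, $I_2=\{r>0,\ s=-r\}$, $I_3=\{r<0,\ s=r\}$, $I_4=\{r<0,\ s=-2r\}$ in $\mathbb{R}^3$. Consider the condition (H) $(a,r,s)(-\infty)=(a_0,0,0)$ and $(a,r,s)(+\infty)=(0,0,0)$. (i) There is a unique $a_0\in\mathbb{R}$ for which there exists a solution contained in $I_1$ satisfying (H); moreover $a_0=-4v$. (ii) There is a unique $a_0\in\mathbb{R}$ for which there exists a solution contained in $I_4$ satisfying (H); moreover $a_0=4v$. (iii) There is no solution contained in $I_2$ or in $I_3$ satisfying (H). *)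

theory Defs
  imports Complex_Main
begin

definition is_solution :: "real \<Rightarrow> (real \<Rightarrow> real) \<Rightarrow> (real \<Rightarrow> real) \<Rightarrow> (real \<Rightarrow> real) \<Rightarrow> bool" where
  "is_solution v a r s \<longleftrightarrow>
     (\<forall>\<xi>. (a has_real_derivative r \<xi>) (at \<xi>)
        \<and> (r has_real_derivative (- v * r \<xi> - s \<xi> * a \<xi> / 2 + a \<xi> * \<bar>r \<xi>\<bar> / 2)) (at \<xi>)
        \<and> (s has_real_derivative (- v * s \<xi> - r \<xi> * a \<xi>)) (at \<xi>))"

definition I1 :: "(real \<times> real \<times> real) set" where
  "I1 = {(a, r, s). r > 0 \<and> s = 2 * r}"
definition I2 :: "(real \<times> real \<times> real) set" where
  "I2 = {(a, r, s). r > 0 \<and> s = - r}"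
definition I3 :: "(real \<times> real \<times> real) set" where
  "I3 = {(a, r, s). r < 0 \<and> s = r}"
definition I4 :: "(real \<times> real \<times> real) set" where
  "I4 = {(a, r, s). r < 0 \<and> s = - 2 * r}"

definition cond_H :: "real \<Rightarrow> (real \<Rightarrow> real) \<Rightarrow> (real \<Rightarrow> real) \<Rightarrow> (real \<Rightarrow> real) \<Rightarrow> bool" where
  "cond_H a0 a r s \<longleftrightarrow>
     (a \<longlongrightarrow> a0) at_bot \<and> (r \<longlongrightarrow> 0) at_bot \<and> (s \<longlongrightarrow> 0) at_bot \<and>
     (a \<longlongrightarrow> 0) at_top \<and> (r \<longlongrightarrow> 0) at_top \<and> (s \<longlongrightarrow> 0) at_top"

definition contained_in :: "(real \<times> real \<times> real) set \<Rightarrow> (real \<Rightarrow> real) \<Rightarrow> (real \<Rightarrow> real) \<Rightarrow> (real \<Rightarrow> real) \<Rightarrow> bool" where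
  "contained_in I a r s \<longleftrightarrow> (\<forall>\<xi>. (a \<xi>, r \<xi>, s \<xi>) \<in> I)"

end

theory Submission
  imports Defs
begin

lemma mono_sign:
  fixes a r :: "real \<Rightarrow> real"
  assumes d: "\<And>x. (a has_real_derivative r x) (at x)"
    and pos: "\<And>x. r x > 0"
    and lb: "(a \<longlongrightarrow> a0) at_bot" and lt: "(a \<longlongrightarrow> 0) at_top"
  shows "a0 < 0"
proof -
  have inc: "a x < a y" if "x < y" for x y
    using DERIV_pos_imp_increasing[OF that] d pos by blast
  have a1: "a 1 \<le> 0"
  proof -
    have "eventually (\<lambda>x. a 1 \<le> a x) at_top"
      using eventually_ge_at_top[of "1::real"]
      by eventually_elim (metis inc order_le_less order_less_imp_le)
    then show ?thesis using tendsto_lowerbound[OF lt] by auto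
  qed
  have "a0 \<le> a 0"
  proof -
    have "eventually (\<lambda>x. a x \<le> a 0) at_bot"
      using eventually_le_at_bot[of "0::real"]
      by eventually_elim (metis inc order_le_less order_less_imp_le)
    then show ?thesis using tendsto_upperbound[OF lb] by auto
  qed
  moreover have "a 0 < a 1" using inc by simp
  ultimately show ?thesis using a1 by linarith
qed

lemma conserv:
  fixes a r :: "real \<Rightarrow> real"
  assumes da: "\<And>x. (a has_real_derivative r x) (at x)"
    and dr: "\<And>x. (r has_real_derivative (- (p + q * a x) * r x)) (at x)"
    and lb: "(a \<longlongrightarrow> a0) at_bot" and rb: "(r \<longlongrightarrow> 0) at_bot"
    and lt: "(a \<longlongrightarrow> 0) at_top" and rt: "(r \<longlongrightarrow> 0) at_top"
  shows "p * a0 + q / 2 * a0 ^ 2 = 0"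
proof -
  define F where "F x = r x + p * a x + q / 2 * (a x)^2" for x
  have dF: "(F has_real_derivative 0) (at x)" for x
  proof -
    have "(F has_real_derivative (- (p + q * a x) * r x + p * r x + q / 2 * (2 * a x * r x))) (at x)"
    proof -
      have sq: "((\<lambda>x. (a x)^2) has_real_derivative 2 * a x * r x) (at x)"
        using DERIV_power[OF da[of x], of 2] by (simp add: mult.commute mult.left_commute)
      show ?thesis unfolding F_def[abs_def]
        by (intro DERIV_add DERIV_cmult dr da sq)
    qed
    then show ?thesis by (simp add: algebra_simps)
  qed
  have cst: "F x = F 0" for x
    using DERIV_isconst_all dF by blast
  have Fc: "F = (\<lambda>_. F 0)" using cst by (rule ext)
  have "(F \<longlongrightarrow> 0 + p * 0 + q / 2 * 0 ^ 2) at_top"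
    unfolding F_def[abs_def] by (intro tendsto_intros rt lt)
  moreover have "(F \<longlongrightarrow> F 0) at_top" using Fc tendsto_const by metis
  ultimately have F0: "F 0 = 0"
    using tendsto_unique[OF trivial_limit_at_top_linorder] by force
  have "(F \<longlongrightarrow> 0 + p * a0 + q / 2 * a0 ^ 2) at_bot"
    unfolding F_def[abs_def] by (intro tendsto_intros rb lb)
  moreover have "(F \<longlongrightarrow> F 0) at_bot" using Fc tendsto_const by metis
  ultimately show ?thesis
    using tendsto_unique[OF trivial_limit_at_bot_linorder] F0 by force
qed

lemma ex_sol:
  fixes v c :: real and a r :: "real \<Rightarrow> real"
  assumes v: "v > 0" and c: "c = 1 \<or> c = -1"
    and a_def: "a = (\<lambda>x. - c * 4 * v / (1 + exp (v * x)))"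
    and r_def: "r = (\<lambda>x. - v * a x - c * (a x)^2 / 4)"
  shows "(\<forall>x. (a has_real_derivative r x) (at x))"
    "(\<forall>x. (r has_real_derivative (- v * r x - c * a x * r x / 2)) (at x))"
    "(\<forall>x. c * r x > 0)"
    "(a \<longlongrightarrow> - c * 4 * v) at_bot" "(r \<longlongrightarrow> 0) at_bot"
    "(a \<longlongrightarrow> 0) at_top" "(r \<longlongrightarrow> 0) at_top"
proof -
  have rx: "r x = c * 4 * v * (v * exp (v * x)) / (1 + exp (v * x))^2" for x
  proof -
    define e where "e = exp (v * x)"
    have e: "e > 0" unfolding e_def by simp
    then have e1: "1 + e \<noteq> 0" by simp
    have "-v * (- c * 4 * v / (1 + e)) - c * (- c * 4 * v / (1 + e))^2 / 4
          = c * 4 * v * (v * e) / (1 + e)^2"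
      using c e e1 by (auto simp: divide_simps power2_eq_square) (auto simp: algebra_simps)
    then show ?thesis unfolding r_def a_def e_def by simp
  qed
  show da: "\<forall>x. (a has_real_derivative r x) (at x)"
  proof
    fix x
    have pos: "1 + exp (v * x) \<noteq> 0" using exp_gt_zero[of "v * x"] by linarith
    have "(a has_real_derivative (c * 4 * v * (v * exp (v * x)) / (1 + exp (v * x))^2)) (at x)"
      unfolding a_def
      apply (intro derivative_eq_intros)
      using pos apply (auto simp: power2_eq_square mult.commute)
      done
    then show "(a has_real_derivative r x) (at x)" using rx by simp
  qed
  show "\<forall>x. (r has_real_derivative (- v * r x - c * a x * r x / 2)) (at x)"
  proof
    fix x
    have sq: "((\<lambda>x. (a x)^2) has_real_derivative 2 * a x * r x) (at x)"
      using DERIV_power[OF da[rule_format, of x], of 2] by (simp add: mult.commute mult.left_commute)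
    have "((\<lambda>x. - v * a x - c * (a x)^2 / 4) has_real_derivative (- v * r x - c * (2 * a x * r x) / 4)) (at x)"
      using DERIV_diff[OF DERIV_cmult[OF da[rule_format, of x], of "-v"] DERIV_cdivide[OF DERIV_cmult[OF sq, of c], of 4]]
      by (simp add: mult.assoc)
    from this[folded r_def] show "(r has_real_derivative (- v * r x - c * a x * r x / 2)) (at x)" by (simp add: mult.assoc)
  qed
  show "\<forall>x. c * r x > 0"
  proof
    fix x
    have "c * r x = 4 * v * (v * exp (v * x)) / (1 + exp (v * x))^2"
      unfolding rx using c by auto
    moreover have "4 * v * (v * exp (v * x)) / (1 + exp (v * x))^2 > 0"
    proof -
      have "1 + exp (v * x) > 0" using exp_gt_zero[of "v * x"] by linarith
      then show ?thesis using v by (intro divide_pos_pos mult_pos_pos) auto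
    qed
    ultimately show "c * r x > 0" by simp
  qed
  have vb: "filterlim (\<lambda>x. v * x) at_bot at_bot"
    using filterlim_tendsto_pos_mult_at_bot[OF tendsto_const v filterlim_ident] .
  have vt: "filterlim (\<lambda>x. v * x) at_top at_top"
    using filterlim_tendsto_pos_mult_at_top[OF tendsto_const v filterlim_ident] .
  have "((\<lambda>x. exp (v * x)) \<longlongrightarrow> 0) at_bot"
    using filterlim_compose[OF exp_at_bot vb] .
  then have lb: "((\<lambda>x. 1 + exp (v * x)) \<longlongrightarrow> 1) at_bot"
    using tendsto_add[OF tendsto_const, of _ 0 at_bot 1] by simp
  have "filterlim (\<lambda>x. exp (v * x)) at_top at_top"
    using filterlim_compose[OF exp_at_top vt] .
  then have lt: "filterlim (\<lambda>x. 1 + exp (v * x)) at_top at_top"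
    by (rule filterlim_tendsto_add_at_top[OF tendsto_const])
  show ab: "(a \<longlongrightarrow> - c * 4 * v) at_bot"
    unfolding a_def using tendsto_divide[OF tendsto_const lb, of "- c * 4 * v"] by simp
  show at: "(a \<longlongrightarrow> 0) at_top"
    unfolding a_def
    by (rule tendsto_divide_0[OF tendsto_const]) (rule filterlim_at_top_imp_at_infinity[OF lt])
  have "(r \<longlongrightarrow> - v * (- c * 4 * v) - c * (- c * 4 * v)^2 / 4) at_bot"
    unfolding r_def by (intro tendsto_intros ab) auto
  moreover have "- v * (- c * 4 * v) - c * (- c * 4 * v)^2 / 4 = 0"
    using c by (auto simp: power2_eq_square algebra_simps)
  ultimately show "(r \<longlongrightarrow> 0) at_bot" by metis
  have "(r \<longlongrightarrow> - v * 0 - c * 0^2 / 4) at_top"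
    unfolding r_def by (intro tendsto_intros at) auto
  then show "(r \<longlongrightarrow> 0) at_top" by simp
qed

lemma case_I1:
  assumes v: "v > 0" and S: "is_solution v a r s" and C: "contained_in I1 a r s" and H: "cond_H a0 a r s"
  shows "a0 = - 4 * v"
proof -
  have da: "(a has_real_derivative r x) (at x)" for x using S unfolding is_solution_def by blast
  have dr: "(r has_real_derivative (- (v + 1/2 * a x) * r x)) (at x)" for x
  proof -
    have d: "(r has_real_derivative (- v * r x - s x * a x / 2 + a x * \<bar>r x\<bar> / 2)) (at x)"
      using S unfolding is_solution_def by blast
    have c: "r x > 0" "s x = 2 * r x" using C unfolding contained_in_def I1_def by auto
    have eq: "- v * r x - s x * a x / 2 + a x * \<bar>r x\<bar> / 2 = - (v + 1/2 * a x) * r x"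
      using c by (simp add: algebra_simps)
    show ?thesis using d[unfolded eq] .
  qed
  have pos: "r x > 0" for x using C unfolding contained_in_def I1_def by auto
  have lim: "(a \<longlongrightarrow> a0) at_bot" "(r \<longlongrightarrow> 0) at_bot" "(a \<longlongrightarrow> 0) at_top" "(r \<longlongrightarrow> 0) at_top"
    using H unfolding cond_H_def by auto
  have "v * a0 + (1/2) / 2 * a0 ^ 2 = 0" by (rule conserv[OF da dr lim])
  moreover have "a0 < 0" by (rule mono_sign[OF da pos lim(1) lim(3)])
  ultimately have "a0 * (a0 + 4 * v) = 0" by (simp add: power2_eq_square field_simps)
  with \<open>a0 < 0\<close> show ?thesis by simp
qed

lemma case_I4:
  assumes v: "v > 0" and S: "is_solution v a r s" and C: "contained_in I4 a r s" and H: "cond_H a0 a r s"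
  shows "a0 = 4 * v"
proof -
  have da: "(a has_real_derivative r x) (at x)" for x using S unfolding is_solution_def by blast
  have dr: "(r has_real_derivative (- (v + (-1/2) * a x) * r x)) (at x)" for x
  proof -
    have d: "(r has_real_derivative (- v * r x - s x * a x / 2 + a x * \<bar>r x\<bar> / 2)) (at x)"
      using S unfolding is_solution_def by blast
    have c: "r x < 0" "s x = - 2 * r x" using C unfolding contained_in_def I4_def by auto
    have eq: "- v * r x - s x * a x / 2 + a x * \<bar>r x\<bar> / 2 = - (v + (-1/2) * a x) * r x"
      using c by (simp add: algebra_simps)
    show ?thesis using d[unfolded eq] .
  qed
  have da': "((\<lambda>x. - a x) has_real_derivative - r x) (at x)" for x using DERIV_minus[OF da] .
  have pos: "- r x > 0" for x using C unfolding contained_in_def I4_def by auto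
  have lim: "(a \<longlongrightarrow> a0) at_bot" "(r \<longlongrightarrow> 0) at_bot" "(a \<longlongrightarrow> 0) at_top" "(r \<longlongrightarrow> 0) at_top"
    using H unfolding cond_H_def by auto
  have "v * a0 + (-1/2) / 2 * a0 ^ 2 = 0" by (rule conserv[OF da dr lim])
  moreover have "- a0 < 0" using mono_sign[OF da' pos tendsto_minus[OF lim(1)]] tendsto_minus[OF lim(3)] by simp
  ultimately show ?thesis by (simp add: power2_eq_square algebra_simps)
qed

lemma case_I2:
  assumes v: "v > 0" and S: "is_solution v a r s" and C: "contained_in I2 a r s" and H: "cond_H a0 a r s"
  shows False
proof -
  have da: "(a has_real_derivative r x) (at x)" for x using S unfolding is_solution_def by blast
  have dr: "(r has_real_derivative (- (v + (-1) * a x) * r x)) (at x)" for x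
  proof -
    have d: "(r has_real_derivative (- v * r x - s x * a x / 2 + a x * \<bar>r x\<bar> / 2)) (at x)"
      using S unfolding is_solution_def by blast
    have c: "r x > 0" "s x = - r x" using C unfolding contained_in_def I2_def by auto
    have eq: "- v * r x - s x * a x / 2 + a x * \<bar>r x\<bar> / 2 = - (v + (-1) * a x) * r x"
      using c by (simp add: algebra_simps)
    show ?thesis using d[unfolded eq] .
  qed
  have pos: "r x > 0" for x using C unfolding contained_in_def I2_def by auto
  have lim: "(a \<longlongrightarrow> a0) at_bot" "(r \<longlongrightarrow> 0) at_bot" "(a \<longlongrightarrow> 0) at_top" "(r \<longlongrightarrow> 0) at_top"
    using H unfolding cond_H_def by auto
  have "v * a0 + (-1) / 2 * a0 ^ 2 = 0" by (rule conserv[OF da dr lim])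
  moreover have "a0 < 0" by (rule mono_sign[OF da pos lim(1) lim(3)])
  ultimately show ?thesis using v by (simp add: power2_eq_square algebra_simps)
qed

lemma case_I3:
  assumes v: "v > 0" and S: "is_solution v a r s" and C: "contained_in I3 a r s" and H: "cond_H a0 a r s"
  shows False
proof -
  have da: "(a has_real_derivative r x) (at x)" for x using S unfolding is_solution_def by blast
  have dr: "(r has_real_derivative (- (v + 1 * a x) * r x)) (at x)" for x
  proof -
    have d: "(r has_real_derivative (- v * r x - s x * a x / 2 + a x * \<bar>r x\<bar> / 2)) (at x)"
      using S unfolding is_solution_def by blast
    have c: "r x < 0" "s x = r x" using C unfolding contained_in_def I3_def by auto
    have eq: "- v * r x - s x * a x / 2 + a x * \<bar>r x\<bar> / 2 = - (v + 1 * a x) * r x"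
      using c by (simp add: algebra_simps)
    show ?thesis using d[unfolded eq] .
  qed
  have da': "((\<lambda>x. - a x) has_real_derivative - r x) (at x)" for x using DERIV_minus[OF da] .
  have pos: "- r x > 0" for x using C unfolding contained_in_def I3_def by auto
  have lim: "(a \<longlongrightarrow> a0) at_bot" "(r \<longlongrightarrow> 0) at_bot" "(a \<longlongrightarrow> 0) at_top" "(r \<longlongrightarrow> 0) at_top"
    using H unfolding cond_H_def by auto
  have "v * a0 + 1 / 2 * a0 ^ 2 = 0" by (rule conserv[OF da dr lim])
  moreover have "- a0 < 0" using mono_sign[OF da' pos tendsto_minus[OF lim(1)]] tendsto_minus[OF lim(3)] by simp
  ultimately have "a0 * (2 * v + a0) = 0" by (simp add: power2_eq_square field_simps)
  moreover have "a0 * (2 * v + a0) > 0" using v \<open>- a0 < 0\<close> by (intro mult_pos_pos) auto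
  ultimately show False by (metis less_irrefl)
qed

lemma exist_I1:
  assumes v: "v > 0"
  shows "\<exists>a r s. is_solution v a r s \<and> contained_in I1 a r s \<and> cond_H (- 4 * v) a r s"
proof -
  define a where "a = (\<lambda>x. - 1 * 4 * v / (1 + exp (v * x)))"
  define r where "r = (\<lambda>x. - v * a x - 1 * (a x)^2 / 4)"
  note E = ex_sol[OF v _ a_def r_def, simplified]
  have "is_solution v a r (\<lambda>x. 2 * r x)"
    unfolding is_solution_def
  proof
    fix x
    have rp: "r x > 0" using E by auto
    have d1: "(a has_real_derivative r x) (at x)" using E by auto
    have d2: "(r has_real_derivative (- v * r x - a x * r x / 2)) (at x)" using E by auto
    have d3: "((\<lambda>x. 2 * r x) has_real_derivative 2 * (- v * r x - a x * r x / 2)) (at x)"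
      using DERIV_cmult[OF d2, of 2] .
    show "(a has_real_derivative r x) (at x) \<and>
         (r has_real_derivative - v * r x - 2 * r x * a x / 2 + a x * \<bar>r x\<bar> / 2) (at x) \<and>
         ((\<lambda>x. 2 * r x) has_real_derivative - v * (2 * r x) - r x * a x) (at x)"
    proof (intro conjI d1)
      have eq: "- v * r x - 2 * r x * a x / 2 + a x * \<bar>r x\<bar> / 2 = - v * r x - a x * r x / 2"
        using rp by (simp add: algebra_simps)
      show "(r has_real_derivative - v * r x - 2 * r x * a x / 2 + a x * \<bar>r x\<bar> / 2) (at x)"
        unfolding eq by (rule d2)
      have eq: "- v * (2 * r x) - r x * a x = 2 * (- v * r x - a x * r x / 2)"
        by (simp add: algebra_simps)
      show "((\<lambda>x. 2 * r x) has_real_derivative - v * (2 * r x) - r x * a x) (at x)"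
        unfolding eq by (rule d3)
    qed
  qed
  moreover have "contained_in I1 a r (\<lambda>x. 2 * r x)"
    unfolding contained_in_def I1_def using E by auto
  moreover have "cond_H (- 4 * v) a r (\<lambda>x. 2 * r x)"
    unfolding cond_H_def using E tendsto_mult[OF tendsto_const, of r 0 _ 2] by auto
  ultimately show ?thesis by blast
qed

lemma exist_I4:
  assumes v: "v > 0"
  shows "\<exists>a r s. is_solution v a r s \<and> contained_in I4 a r s \<and> cond_H (4 * v) a r s"
proof -
  define a where "a = (\<lambda>x. - (- 1) * 4 * v / (1 + exp (v * x)))"
  define r where "r = (\<lambda>x. - v * a x - (- 1) * (a x)^2 / 4)"
  note E = ex_sol[OF v _ a_def r_def, simplified]
  have "is_solution v a r (\<lambda>x. - 2 * r x)"
    unfolding is_solution_def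
  proof
    fix x
    have rp: "r x < 0" using E by auto
    have d1: "(a has_real_derivative r x) (at x)" using E by auto
    have d2: "(r has_real_derivative (- v * r x + a x * r x / 2)) (at x)" using E by auto
    have d3: "((\<lambda>x. - 2 * r x) has_real_derivative (- 2) * (- v * r x + a x * r x / 2)) (at x)"
      using DERIV_cmult[OF d2, of "- 2"] .
    show "(a has_real_derivative r x) (at x) \<and>
         (r has_real_derivative - v * r x - - 2 * r x * a x / 2 + a x * \<bar>r x\<bar> / 2) (at x) \<and>
         ((\<lambda>x. - 2 * r x) has_real_derivative - v * (- 2 * r x) - r x * a x) (at x)"
    proof (intro conjI d1)
      have eq: "- v * r x - - 2 * r x * a x / 2 + a x * \<bar>r x\<bar> / 2 = - v * r x + a x * r x / 2"
        using rp by (simp add: algebra_simps)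
      show "(r has_real_derivative - v * r x - - 2 * r x * a x / 2 + a x * \<bar>r x\<bar> / 2) (at x)"
        unfolding eq by (rule d2)
      have eq: "- v * (- 2 * r x) - r x * a x = (- 2) * (- v * r x + a x * r x / 2)"
        by (simp add: algebra_simps)
      show "((\<lambda>x. - 2 * r x) has_real_derivative - v * (- 2 * r x) - r x * a x) (at x)"
        unfolding eq by (rule d3)
    qed
  qed
  moreover have "contained_in I4 a r (\<lambda>x. - 2 * r x)"
    unfolding contained_in_def I4_def using E by auto
  moreover have "cond_H (4 * v) a r (\<lambda>x. - 2 * r x)"
    unfolding cond_H_def using E tendsto_mult[OF tendsto_const, of r 0 _ "- 2"] by auto
  ultimately show ?thesis by blast
qed

theorem lemma6:
  fixes v :: real
  assumes "v > 0"
  shows "({a0. \<exists>a r s. is_solution v a r s \<and> contained_in I1 a r s \<and> cond_H a0 a r s} = {- 4 * v})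
    \<and> ({a0. \<exists>a r s. is_solution v a r s \<and> contained_in I4 a r s \<and> cond_H a0 a r s} = {4 * v})
    \<and> \<not> (\<exists>a0 a r s. is_solution v a r s \<and> contained_in I2 a r s \<and> cond_H a0 a r s)
    \<and> \<not> (\<exists>a0 a r s. is_solution v a r s \<and> contained_in I3 a r s \<and> cond_H a0 a r s)"
  using case_I1[OF assms] case_I4[OF assms] case_I2[OF assms] case_I3[OF assms]
    exist_I1[OF assms] exist_I4[OF assms]
  by blast

end
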